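(* Let $a\in\mathbb{N}$ and $b,d\in\mathbb{Z}$. Suppose there is a prime $p$ with $v_p(a)>\max\{v_p(b),v_p(d)\}$ and $v_p(b)\neq v_p(d)$. Then there exists a completely multiplicative function $f:\mathbb{N}\to\mathbb{S}^1$ such that $$\liminf_{n\to\infty}|f(an+b)-f(an+d)|>0.$$
   Context: $\mathbb{N}=\{1,2,\dots\}$, $\mathbb{S}^1$ the unit circle; completely multiplicative means $f(mn)=f(m)f(n)$. $v_p$ is the $p$-adic valuation (with $v_p(0)=\infty$). The expression is considered for $n$ large enough that $an+b,an+d\ge1$. *)

theory Defs
  imports "HOL-Analysis.Analysis" "HOL-Computational_Algebra.Computational_Algebra"
begin

definition vp :: "nat \<Rightarrow> int \<Rightarrow> enat" where
  "vp p x = (if x = 0 then \<infinity> else enat (multiplicity (int p) x))"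

text \<open>Completely multiplicative function from the positive integers to the unit circle;
  values at 0 are irrelevant.\<close>
definition cm_unimodular :: "(nat \<Rightarrow> complex) \<Rightarrow> bool" where
  "cm_unimodular f \<longleftrightarrow>
     (\<forall>n\<ge>1. cmod (f n) = 1) \<and>
     (\<forall>m\<ge>1. \<forall>n\<ge>1. f (m * n) = f m * f n)"

end

theory Submission
  imports Defs
begin

lemma mult_shift:
  fixes q x y :: int
  assumes "q ^ Suc k dvd x" "multiplicity q y = k" "y \<noteq> 0" "\<not> is_unit q"
  shows "multiplicity q (x + y) = k"
proof (rule multiplicity_eqI)
  have "q ^ k dvd y" using multiplicity_dvd[of q y] assms(2) by simp
  moreover have "q ^ k dvd x" using assms(1) dvd_mult_right[of q "q^k" x] by simp
  ultimately show "q ^ k dvd x + y" by (rule dvd_add[rotated])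
  have "\<not> q ^ Suc k dvd y" using power_dvd_iff_le_multiplicity[OF assms(3,4), of "Suc k"] assms(2) by simp
  then show "\<not> q ^ Suc k dvd x + y" using assms(1) dvd_add_right_iff by blast
qed

theorem lemma4p3:
  fixes a :: nat and b d :: int and p :: nat
  assumes "a \<ge> 1"
    and "prime p"
    and "vp p (int a) > max (vp p b) (vp p d)"
    and "vp p b \<noteq> vp p d"
  shows "\<exists>f. cm_unimodular f \<and>
    Liminf sequentially
      (\<lambda>n::nat. ereal (cmod (f (nat (int a * int n + b)) - f (nat (int a * int n + d))))) > 0"
proof -
  define q where "q = int p"
  have pq: "prime q" using assms(2) by (simp add: q_def)
  have nu: "\<not> is_unit q" using pq not_prime_unit by blast
  define va where "va = multiplicity q (int a)"
  define vb where "vb = multiplicity q b"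
  define vd where "vd = multiplicity q d"
  have a0: "int a \<noteq> 0" using assms(1) by simp
  have b0: "b \<noteq> 0" and d0: "d \<noteq> 0" using assms(3) a0 by (auto simp: vp_def)
  have vbl: "vb < va" and vdl: "vd < va" using assms(3) a0 b0 d0
    by (auto simp: vp_def q_def va_def vb_def vd_def)
  have vne: "vb \<noteq> vd" using assms(4) b0 d0 by (auto simp: vp_def q_def vb_def vd_def)
  define \<theta> where "\<theta> = pi / (real vd - real vb)"
  define f where "f m = cis (\<theta> * real (multiplicity q (int m)))" for m :: nat
  have cm: "cm_unimodular f"
    unfolding cm_unimodular_def
  proof (intro conjI allI impI)
    fix n :: nat show "cmod (f n) = 1" by (simp add: f_def)
  next
    fix m n :: nat assume "m \<ge> 1" "n \<ge> 1"
    then have "multiplicity q (int (m * n)) = multiplicity q (int m) + multiplicity q (int n)"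
      using pq unfolding of_nat_mult by (intro prime_elem_multiplicity_mult_distrib) auto
    then show "f (m * n) = f m * f n" by (simp add: f_def cis_mult distrib_left)
  qed
  have key: "multiplicity q (int a * int n + c) = multiplicity q c"
    if "c \<noteq> 0" "multiplicity q c < va" for n c
  proof (rule mult_shift[OF _ refl that(1) nu])
    have "q ^ va dvd int a * int n" using multiplicity_dvd[of q "int a"] va_def by simp
    moreover have "q ^ Suc (multiplicity q c) dvd q ^ va"
      using that(2) by (intro le_imp_power_dvd) simp
    ultimately show "q ^ Suc (multiplicity q c) dvd int a * int n" by (rule dvd_trans[rotated])
  qed
  have diff: "cmod (cis (\<theta> * real vb) - cis (\<theta> * real vd)) = 2"
  proof -
    have "real vd - real vb \<noteq> 0" using vne by simp
    then have "\<theta> * (real vd - real vb) = pi" by (simp add: \<theta>_def)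
    then have "\<theta> * real vd = \<theta> * real vb + pi" by (simp add: algebra_simps)
    then have "cis (\<theta> * real vd) = - cis (\<theta> * real vb)"
      by (simp add: cis_mult[symmetric])
    then show ?thesis by (simp add: norm_mult)
  qed
  have ev: "eventually (\<lambda>n. ereal 1 \<le> ereal (cmod (f (nat (int a * int n + b)) - f (nat (int a * int n + d))))) sequentially"
    unfolding eventually_sequentially
  proof (intro exI allI impI)
    fix n :: nat assume n: "n \<ge> nat (\<bar>b\<bar> + \<bar>d\<bar> + 1)"
    have "int a * int n \<ge> int n" using assms(1) mult_right_mono[of 1 "int a" "int n"] by simp
    then have pb: "int a * int n + b \<ge> 1" and pd: "int a * int n + d \<ge> 1" using n by auto
    have "f (nat (int a * int n + b)) = cis (\<theta> * real vb)"
      using pb key[OF b0] vbl by (simp add: f_def vb_def)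
    moreover have "f (nat (int a * int n + d)) = cis (\<theta> * real vd)"
      using pd key[OF d0] vdl by (simp add: f_def vd_def)
    ultimately show "ereal 1 \<le> ereal (cmod (f (nat (int a * int n + b)) - f (nat (int a * int n + d))))"
      using diff by simp
  qed
  have "ereal 1 \<le> Liminf sequentially (\<lambda>n::nat. ereal (cmod (f (nat (int a * int n + b)) - f (nat (int a * int n + d)))))"
    by (rule Liminf_bounded[OF ev])
  then show ?thesis using cm by (intro exI[of _ f]) (auto intro: less_le_trans[of 0 "ereal 1"])
qed

end
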